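(* Let $\mu>0$, $\tau>0$, and let $m,n$ be positive integers with $0<m<n$; put $\alpha=m/n$. Let $G_{m/n}(t)$, $t\ge 0$, denote the relaxation modulus of the Andrade model, i.e. the function whose Laplace transform is $$\tilde G_{m/n}(s)=\mathcal{L}[G_{m/n}(t);s]=\frac{\mu\,\tau}{s\,\tau+\Gamma\!\left(1+\tfrac{m}{n}\right)(s\,\tau)^{1-m/n}+1}.$$ Let $$p_{n,m}(r)=r^{n}+\Gamma\!\left(1+\tfrac{m}{n}\right)r^{n-m}+1,$$ and suppose $p_{n,m}$ has $n$ non-repeated (pairwise distinct) complex roots $r_1,\dots,r_n$. Then for $t\ge 0$ (with $t>0$ where the power $t^{1/n-1}$ is singular), $$G_{m/n}(t)=\mu\left(\frac{t}{\tau}\right)^{1/n-1}\sum_{k=1}^{n}\frac{\mathrm{E}_{\frac1n,\frac1n}\!\left(r_k\,(t/\tau)^{1/n}\right)}{p_{n,m}'(r_k)},$$ equivalently $$G_{m/n}(t)=\mu\sum_{k=1}^{n}\frac{\mathrm{R}_{1/n-1}\left(r_k,\,t/\tau\right)}{p_{n,m}'(r_k)}.$$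
   Context: The two-parameter Mittag--Leffler function is $\mathrm{E}_{a,b}(z)=\sum_{k=0}^{\infty}\frac{z^k}{\Gamma(b+a k)}$. The Rabotnov function is $\mathrm{R}_{\nu}(\lambda,t)=t^{\nu}\,\mathrm{E}_{\nu+1,\nu+1}(\lambda\,t^{\nu+1})$. Background: in the Andrade model of linear viscoelasticity the creep compliance is $J_\alpha(t)=\frac{1}{\mu}\left[1+(t/\tau)^\alpha+t/\tau\right]$, and the relaxation modulus $G_\alpha$ is determined by $\tilde J_\alpha(s)\tilde G_\alpha(s)=1/s^2$ (Laplace transforms), which gives the displayed $\tilde G$. *)

theory Defs
  imports "HOL-Analysis.Analysis" "HOL-Computational_Algebra.Polynomial"
begin

definition mittag_leffler :: "real \<Rightarrow> real \<Rightarrow> complex \<Rightarrow> complex" where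
  "mittag_leffler a b z = (\<Sum>k. z ^ k / complex_of_real (Gamma (b + a * real k)))"

definition rabotnov :: "real \<Rightarrow> complex \<Rightarrow> real \<Rightarrow> complex" where
  "rabotnov \<nu> lam t = complex_of_real (t powr \<nu>) *
      mittag_leffler (\<nu> + 1) (\<nu> + 1) (lam * complex_of_real (t powr (\<nu> + 1)))"

definition p_nm :: "nat \<Rightarrow> nat \<Rightarrow> complex poly" where
  "p_nm n m = monom 1 n + monom (complex_of_real (Gamma (1 + real m / real n))) (n - m) + 1"

end

theory Submission
  imports Defs
begin


lemma partial_frac:
  fixes p :: "complex poly" and r :: "nat \<Rightarrow> complex"
  assumes deg: "degree p = n" and lc: "lead_coeff p = 1" and n: "n > 0"
    and roots: "\<And>k. k \<in> {1..n} \<Longrightarrow> poly p (r k) = 0" and inj: "inj_on r {1..n}"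
    and w: "poly p w \<noteq> 0"
  shows "(\<Sum>k=1..n. 1 / (poly (pderiv p) (r k) * (w - r k))) = 1 / poly p w"
proof -
  define q where "q k = p div [:- r k, 1:]" for k
  have p0: "p \<noteq> 0" using lc by auto
  have pq: "p = [:- r k, 1:] * q k" if "k \<in> {1..n}" for k
  proof -
    have "[:- r k, 1:] dvd p" using roots[OF that] by (simp add: dvd_iff_poly_eq_0)
    then show ?thesis unfolding q_def by (rule dvd_mult_div_cancel[symmetric])
  qed
  have q0: "q k \<noteq> 0" if "k \<in> {1..n}" for k using pq[OF that] p0 by auto
  have degq: "degree (q k) = n - 1" if "k \<in> {1..n}" for k
  proof -
    have "degree p = degree [:- r k, 1:] + degree (q k)"
      by (subst pq[OF that]) (rule degree_mult_eq, simp, fact q0[OF that])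
    then show ?thesis using deg by simp
  qed
  have qroot: "poly (q k) (r j) = 0" if "k \<in> {1..n}" "j \<in> {1..n}" "j \<noteq> k" for k j
  proof -
    have "r j \<noteq> r k" using inj that unfolding inj_on_def by blast
    moreover have "poly p (r j) = (r j - r k) * poly (q k) (r j)"
      by (subst pq[OF that(1)]) (simp add: algebra_simps)
    ultimately show ?thesis using roots[OF that(2)] by simp
  qed
  have cardr: "card (r ` {1..n}) = n" using inj by (simp add: card_image)
  have nroots: "P = 0" if "\<And>j. j \<in> {1..n} \<Longrightarrow> poly P (r j) = 0" "degree P < n" for P :: "complex poly"
  proof (rule ccontr)
    assume P0: "P \<noteq> 0"
    have "r ` {1..n} \<subseteq> {x. poly P x = 0}" using that by auto
    then have "card (r ` {1..n}) \<le> card {x. poly P x = 0}"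
      by (intro card_mono poly_roots_finite P0)
    also have "\<dots> \<le> degree P" by (rule card_poly_roots_bound[OF P0])
    finally show False using cardr that(2) by simp
  qed
  have qnz: "poly (q k) (r k) \<noteq> 0" if k: "k \<in> {1..n}" for k
  proof
    assume h: "poly (q k) (r k) = 0"
    have "q k = 0"
      by (rule nroots) (use h qroot[OF k] degq[OF k] n in auto)
    then show False using q0[OF k] by simp
  qed
  have pd: "poly (pderiv p) (r k) = poly (q k) (r k)" if k: "k \<in> {1..n}" for k
  proof -
    have "pderiv p = [:- r k, 1:] * pderiv (q k) + q k * pderiv [:- r k, 1:]"
      by (subst pq[OF k]) (rule pderiv_mult)
    then show ?thesis by (simp add: pderiv_pCons)
  qed
  define Q where "Q = (\<Sum>k\<in>{1..n}. smult (1 / poly (q k) (r k)) (q k))"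
  have degQ: "degree Q \<le> n - 1" unfolding Q_def
    by (rule degree_sum_le) (use degq in auto)
  have Qr: "poly Q (r j) = 1" if j: "j \<in> {1..n}" for j
  proof -
    have "poly Q (r j) = (\<Sum>k\<in>{1..n}. if k = j then 1 else 0)"
      unfolding Q_def poly_sum
      by (rule sum.cong) (use qroot j qnz in auto)
    also have "\<dots> = 1" using j by simp
    finally show ?thesis .
  qed
  have "Q - 1 = 0"
    by (rule nroots) (use Qr n degQ in \<open>auto intro: le_less_trans[OF degree_diff_le_max]\<close>)
  then have "poly Q w = 1" by simp
  moreover have "poly (q k) w = poly p w / (w - r k)" if k: "k \<in> {1..n}" for k
  proof -
    have "w \<noteq> r k" using w roots[OF k] by auto
    moreover have "poly p w = (w - r k) * poly (q k) w" by (subst pq[OF k]) (simp add: algebra_simps)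
    ultimately show ?thesis by simp
  qed
  ultimately have "(\<Sum>k\<in>{1..n}. poly p w / ((w - r k) * poly (q k) (r k))) = 1"
    unfolding Q_def poly_sum by (simp add: field_simps)
  then have "poly p w * (\<Sum>k\<in>{1..n}. 1 / (poly (pderiv p) (r k) * (w - r k))) = 1"
    by (simp add: sum_distrib_left pd mult.commute)
  then show ?thesis using w by (simp add: field_simps)
qed



lemma pow_fact_le_exp:
  fixes E :: real assumes "E \<ge> 0" shows "E ^ q / fact q \<le> exp E"
proof -
  have s: "(\<lambda>n. E ^ n / fact n) sums exp E" using exp_converges[of E] by (simp add: divide_inverse mult.commute)
  have "(\<Sum>n\<in>{q}. E ^ n / fact n) \<le> (\<Sum>n. E ^ n / fact n)"
    by (rule sum_le_suminf) (use s assms in \<open>auto simp: sums_iff\<close>)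
  also have "\<dots> = exp E" using s by (simp add: sums_iff)
  finally have "(\<Sum>n\<in>{q}. E ^ n / fact n) \<le> exp E" .
  then show ?thesis by simp
qed

lemma Gamma_lower_fact:
  obtains c0 :: real where "c0 > 0" "\<And>x. x \<ge> 1 \<Longrightarrow> Gamma x \<ge> c0 * fact (nat \<lfloor>x\<rfloor> - 1)"
proof -
  have "continuous_on {1..2::real} Gamma"
    by (rule continuous_on_Gamma) (auto elim!: nonpos_Ints_cases)
  then obtain y0 where y0: "y0 \<in> {1..2}" "\<And>y. y \<in> {1..2::real} \<Longrightarrow> Gamma y0 \<le> Gamma y"
    using continuous_attains_inf[of "{1..2::real}" Gamma] by auto
  have c0: "Gamma y0 > 0" using y0 by (intro Gamma_real_pos) auto
  show ?thesis
  proof (rule that[OF c0])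
    fix x :: real assume x: "x \<ge> 1"
    define q where "q = nat \<lfloor>x\<rfloor> - 1"
    define y where "y = x - real q"
    have fl: "real (nat \<lfloor>x\<rfloor>) \<le> x" "x < real (nat \<lfloor>x\<rfloor>) + 1" "nat \<lfloor>x\<rfloor> \<ge> 1"
      using x by linarith+
    have y12: "y \<in> {1..2}" using fl x unfolding y_def q_def by (auto simp: of_nat_diff) linarith
    have ynp: "y \<notin> \<int>\<^sub>\<le>\<^sub>0" using y12 by (auto elim!: nonpos_Ints_cases)
    have "pochhammer y q = Gamma (y + real q) / Gamma y" using pochhammer_Gamma[OF ynp] by simp
    moreover have "Gamma y > 0" using y12 by (intro Gamma_real_pos) auto
    moreover have "y + real q = x" unfolding y_def by simp
    ultimately have gx: "Gamma x = pochhammer y q * Gamma y"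
      by (auto simp: field_simps)
    have "fact q = (\<Prod>i<q. real (Suc i))"
      by (simp add: fact_prod_Suc prod.atLeast0_lessThan_Suc lessThan_atLeast0 of_nat_prod)
    also have "\<dots> \<le> (\<Prod>i<q. y + real i)"
      by (intro prod_mono) (use y12 in auto)
    also have "\<dots> = pochhammer y q" by (simp add: pochhammer_prod lessThan_atLeast0)
    finally have pf: "fact q \<le> pochhammer y q" .
    have "Gamma y0 * fact q \<le> Gamma y * pochhammer y q"
      by (intro mult_mono y0(2) y12 pf) (use c0 y12 in \<open>auto intro: less_imp_le Gamma_real_pos\<close>)
    then show "Gamma x \<ge> Gamma y0 * fact (nat \<lfloor>x\<rfloor> - 1)" using gx q_def by (simp add: mult.commute)
  qed
qed

lemma ml_summable_real:
  fixes \<beta> R :: real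
  assumes b: "\<beta> > 0" and R: "R \<ge> 0"
  shows "summable (\<lambda>j. R ^ j / Gamma (\<beta> + \<beta> * real j))"
proof -
  obtain c0 :: real where c0: "c0 > 0" and gl: "\<And>x. x \<ge> 1 \<Longrightarrow> Gamma x \<ge> c0 * fact (nat \<lfloor>x\<rfloor> - 1)"
    using Gamma_lower_fact by blast
  define R' where "R' = max 1 (2 * R)"
  define E where "E = R' powr (1 / \<beta>)"
  define C where "C = R' powr (2 / \<beta>) * exp E / c0"
  define N where "N = nat \<lceil>1 / \<beta>\<rceil>"
  have R'1: "R' \<ge> 1" unfolding R'_def by simp
  have E0: "E \<ge> 0" unfolding E_def by simp
  show ?thesis
  proof (rule summable_comparison_test'[where g = "\<lambda>j. C * (1/2) ^ j" and N = N])
    show "summable (\<lambda>j. C * (1 / 2) ^ j)"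
      by (intro summable_mult summable_geometric) simp
  next
    fix j assume j: "N \<le> j"
    define x where "x = \<beta> + \<beta> * real j"
    define q where "q = nat \<lfloor>x\<rfloor> - 1"
    have "real j \<ge> 1 / \<beta>" using j unfolding N_def by linarith
    then have "\<beta> * real j \<ge> 1" using b by (simp add: field_simps)
    then have x1: "x \<ge> 1" unfolding x_def using b by simp
    have gx: "Gamma x \<ge> c0 * fact q" using gl[OF x1] unfolding q_def .
    have fq: "fact q > (0::real)" by simp
    have gxp: "Gamma x > 0" using x1 by (intro Gamma_real_pos) simp
    have qx: "real q \<ge> x - 2" unfolding q_def using x1 by (simp add: of_nat_diff) linarith
    have jq: "real j \<le> (real q + 2) / \<beta>"
      using qx b unfolding x_def by (simp add: field_simps)
    have "(2 * R) ^ j \<le> R' ^ j" unfolding R'_def using R by (intro power_mono) auto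
    also have "\<dots> = R' powr real j" using R'1 by (simp add: powr_realpow)
    also have "\<dots> \<le> R' powr ((real q + 2) / \<beta>)" by (rule powr_mono[OF jq R'1])
    also have "\<dots> = R' powr (2 / \<beta>) * E ^ q"
    proof -
      have "E ^ q = E powr real q" using R'1 unfolding E_def by (simp add: powr_realpow)
      also have "\<dots> = R' powr (real q / \<beta>)" unfolding E_def by (simp add: powr_powr)
      finally show ?thesis by (simp add: add_divide_distrib powr_add mult.commute)
    qed
    also have "\<dots> \<le> R' powr (2 / \<beta>) * (exp E * fact q)"
      using pow_fact_le_exp[OF E0, of q] fq by (intro mult_left_mono) (auto simp: field_simps)
    finally have A: "(2 * R) ^ j \<le> R' powr (2 / \<beta>) * exp E * fact q" by simp
    have "norm (R ^ j / Gamma x) = R ^ j / Gamma x" using R gxp by simp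
    also have "\<dots> \<le> R ^ j / (c0 * fact q)"
      by (intro divide_left_mono gx) (use R c0 fq gxp in auto)
    also have "\<dots> = (2 * R) ^ j * (1/2) ^ j / (c0 * fact q)"
      by (simp add: power_mult_distrib power_divide)
    also have "\<dots> \<le> R' powr (2 / \<beta>) * exp E * fact q * (1/2) ^ j / (c0 * fact q)"
      by (intro divide_right_mono mult_right_mono A) (use c0 fq in auto)
    also have "\<dots> = C * (1/2) ^ j" unfolding C_def using fq c0 by (simp add: field_simps)
    finally show "norm (R ^ j / Gamma (\<beta> + \<beta> * real j)) \<le> C * (1/2) ^ j" unfolding x_def .
  qed
qed

lemma ml_summable:
  fixes \<beta> :: real and z :: complex
  assumes b: "\<beta> > 0"
  shows "summable (\<lambda>j. norm (z ^ j / complex_of_real (Gamma (\<beta> + \<beta> * real j))))"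
    and "summable (\<lambda>j. z ^ j / complex_of_real (Gamma (\<beta> + \<beta> * real j)))"
proof -
  have g: "Gamma (\<beta> + \<beta> * real j) > 0" for j using b by (intro Gamma_real_pos) (simp add: add_pos_nonneg)
  have "(\<lambda>j. norm (z ^ j / complex_of_real (Gamma (\<beta> + \<beta> * real j)))) = (\<lambda>j. norm z ^ j / Gamma (\<beta> + \<beta> * real j))"
    by (simp add: norm_divide norm_power abs_of_pos[OF g])
  then show "summable (\<lambda>j. norm (z ^ j / complex_of_real (Gamma (\<beta> + \<beta> * real j))))"
    using ml_summable_real[OF b, of "norm z"] by simp
  then show "summable (\<lambda>j. z ^ j / complex_of_real (Gamma (\<beta> + \<beta> * real j)))"
    by (rule summable_norm_cancel)
qed

lemma ml_sums:
  assumes b: "\<beta> > 0"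
  shows "(\<lambda>j. z ^ j / complex_of_real (Gamma (\<beta> + \<beta> * real j))) sums mittag_leffler \<beta> \<beta> z"
  unfolding mittag_leffler_def using ml_summable(2)[OF b] by (simp add: summable_sums)

lemma ml_isCont:
  assumes b: "\<beta> > 0"
  shows "isCont (mittag_leffler \<beta> \<beta>) z"
proof -
  have *: "mittag_leffler \<beta> \<beta> = (\<lambda>z. \<Sum>j. (1 / complex_of_real (Gamma (\<beta> + \<beta> * real j))) * z ^ j)"
    unfolding mittag_leffler_def by (auto intro!: ext simp: field_simps)
  have "summable (\<lambda>j. (1 / complex_of_real (Gamma (\<beta> + \<beta> * real j))) * of_real (norm z + 1) ^ j)"
    using ml_summable(2)[OF b, of "of_real (norm z + 1)"] by (simp add: field_simps)
  then show ?thesis unfolding * by (rule isCont_powser) simp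
qed



lemma has_integral_of_real':
  assumes "(f has_integral i) S"
  shows "((\<lambda>x. complex_of_real (f x)) has_integral complex_of_real i) S"
  using has_integral_linear[OF assms bounded_linear_of_real] by (simp add: o_def)

lemma hi_Ioi_Ici:
  fixes f :: "real \<Rightarrow> 'a::banach"
  shows "(f has_integral i) {0<..} \<longleftrightarrow> (f has_integral i) {0..}"
  by (rule has_integral_spike_set_eq; rule negligible_subset[OF negligible_sing[of 0]]) auto

lemma integral_tendsto_at_top:
  fixes f :: "real \<Rightarrow> 'a::banach"
  assumes f: "(f has_integral i) {0..}"
  shows "((\<lambda>T. integral {0..T} f) \<longlongrightarrow> i) at_top"
proof (rule tendstoI)
  fix e :: real assume e: "e > 0"
  have nc: "\<not> (\<exists>a b. {0::real..} = cbox a b)"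
  proof
    assume "\<exists>a b. {0::real..} = cbox a b"
    then obtain a b where ab: "{0::real..} = cbox a b" by blast
    have "max b 0 + 1 \<in> {0::real..}" by simp
    then show False unfolding ab by auto
  qed
  obtain B where B: "B > 0" "\<forall>a b. ball 0 B \<subseteq> cbox a b \<longrightarrow>
      (\<exists>z. ((\<lambda>x. if x \<in> {0..} then f x else 0) has_integral z) (cbox a b) \<and> norm (z - i) < e)"
    using has_integral_altD[OF f nc e] by blast
  show "\<forall>\<^sub>F T in at_top. dist (integral {0..T} f) i < e"
    unfolding eventually_at_top_linorder
  proof (intro exI allI impI)
    fix T assume T: "T \<ge> B"
    have "ball 0 B \<subseteq> cbox (-T) T" using T by (auto simp: dist_real_def)
    then obtain z where z: "((\<lambda>x. if x \<in> {0..} then f x else 0) has_integral z) (cbox (-T) T)" "norm (z - i) < e"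
      using B by blast
    have "z = integral {-T..T} (\<lambda>x. if x \<in> {0..} then f x else 0)"
      using z(1) by (simp add: integral_unique)
    also have "\<dots> = integral ({0..} \<inter> {-T..T}) f" by (rule integral_restrict_Int)
    also have "{0..} \<inter> {-T..T} = {0..T}" using T B by auto
    finally show "dist (integral {0..T} f) i < e" using z(2) by (simp add: dist_norm)
  qed
qed

lemma laplace_powr0:
  fixes a c :: real
  assumes a: "a > 0" and c: "c > 0"
  shows "((\<lambda>t. t powr (a - 1) * exp (- c * t)) has_integral Gamma a / c powr a) {0..}"
proof -
  define f where "f u = u powr (a - 1) / exp u" for u :: real
  have fG: "(f has_integral Gamma a) {0..}" unfolding f_def by (rule Gamma_integral_real[OF a])
  have fint: "f integrable_on {0..y}" for y
    using fG by (intro integrable_on_subinterval[of _ "{0..}"]) (auto simp: integrable_on_def)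
  have st: "((\<lambda>t. t powr (a - 1) * exp (- c * t)) has_integral c powr (- a) * integral {0..c*y} f) {0..y}"
    if y: "y \<ge> 0" for y
  proof -
    have "((\<lambda>x. f (c * x)) has_integral (1 / \<bar>c\<bar>) *\<^sub>R integral {0..c*y} f) ((\<lambda>x. x / c) ` {0..c*y})"
      by (rule has_integral_stretch_real[OF integrable_integral[OF fint]]) (use c in auto)
    moreover have "(\<lambda>x. x / c) ` {0..c*y} = {0..y}"
      using c by (auto simp: image_iff intro!: bexI[where x = "c * _"])
    ultimately have h1: "((\<lambda>x. f (c * x)) has_integral (1 / c) * integral {0..c*y} f) {0..y}"
      using c by simp
    have h2: "((\<lambda>x. c powr (1 - a) * f (c * x)) has_integral c powr (1 - a) * ((1 / c) * integral {0..c*y} f)) {0..y}"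
      by (rule has_integral_mult_right[OF h1])
    have eq: "c powr (1 - a) * f (c * x) = x powr (a - 1) * exp (- c * x)" if "x \<in> {0..y}" for x
    proof -
      have "c powr (1 - a) * f (c * x) = (c powr (1 - a) * c powr (a - 1)) * x powr (a - 1) / exp (c * x)"
        unfolding f_def using that c by (simp add: powr_mult)
      also have "c powr (1 - a) * c powr (a - 1) = 1" using c by (simp add: powr_add[symmetric])
      finally show ?thesis by (simp add: exp_minus divide_inverse)
    qed
    have "c powr (1 - a) * ((1 / c) * integral {0..c*y} f) = c powr (- a) * integral {0..c*y} f"
      using c by (simp add: powr_diff powr_minus field_simps)
    then show ?thesis using has_integral_eq[OF eq h2] by simp
  qed
  show ?thesis
  proof (rule has_integral_to_inf)
    fix y :: real
    show "(\<lambda>t. t powr (a - 1) * exp (- c * t)) integrable_on {0..y}"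
    proof (cases "y \<ge> 0")
      case True then show ?thesis using st[OF True] by (auto simp: integrable_on_def)
    next
      case False then show ?thesis by (simp add: integrable_on_def)
    qed
  next
    have lim: "((\<lambda>y. integral {0..c*y} f) \<longlongrightarrow> Gamma a) at_top"
      by (rule filterlim_compose[OF integral_tendsto_at_top[OF fG]])
         (use c in \<open>simp add: filterlim_tendsto_pos_mult_at_top[OF tendsto_const c filterlim_ident]\<close>)
    have "((\<lambda>y. c powr (- a) * integral {0..c*y} f) \<longlongrightarrow> c powr (- a) * Gamma a) at_top"
      by (intro tendsto_intros lim)
    moreover have "\<forall>\<^sub>F y in at_top. c powr (- a) * integral {0..c*y} f = integral {0..y} (\<lambda>t. t powr (a - 1) * exp (- c * t))"
    proof (intro eventually_mono[OF eventually_ge_at_top[of 0]])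
      fix y :: real assume "y \<ge> 0"
      from integral_unique[OF st[OF this]] show "c powr (- a) * integral {0..c*y} f = integral {0..y} (\<lambda>t. t powr (a - 1) * exp (- c * t))"
        by simp
    qed
    ultimately show "((\<lambda>y. integral {0..y} (\<lambda>t. t powr (a - 1) * exp (- c * t))) \<longlongrightarrow> Gamma a / c powr a) at_top"
      using c by (simp add: tendsto_cong powr_minus divide_inverse mult.commute)
  qed auto
qed

lemma laplace_powr:
  fixes a s \<tau> :: real
  assumes a: "a > 0" and s: "s > 0" and tau: "\<tau> > 0"
  shows "((\<lambda>t. exp (- s * t) * (t / \<tau>) powr (a - 1)) has_integral \<tau> * Gamma a / (s * \<tau>) powr a) {0<..}"
proof -
  have h: "((\<lambda>t. \<tau> powr (1 - a) * (t powr (a - 1) * exp (- s * t))) has_integral \<tau> powr (1 - a) * (Gamma a / s powr a)) {0..}"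
    by (rule has_integral_mult_right[OF laplace_powr0[OF a s]])
  have eq: "\<tau> powr (1 - a) * (t powr (a - 1) * exp (- s * t)) = exp (- s * t) * (t / \<tau>) powr (a - 1)" if "t \<in> {0..}" for t
    using that tau by (simp add: powr_divide powr_diff powr_minus field_simps)
  have val: "\<tau> powr (1 - a) * (Gamma a / s powr a) = \<tau> * Gamma a / (s * \<tau>) powr a"
    using tau s by (simp add: powr_diff powr_mult field_simps)
  show ?thesis unfolding hi_Ioi_Ici using has_integral_eq[OF eq h] val by simp
qed



lemma geom_sums_w:
  fixes r :: "'a::{real_normed_field}" and w \<tau> :: real
  assumes w: "w > 0" and rw: "norm r < w"
  shows "(\<lambda>j. of_real \<tau> * r ^ j / of_real w ^ (j + 1)) sums (of_real \<tau> / (of_real w - r))"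
proof -
  have wn: "(of_real w :: 'a) \<noteq> 0" using w by simp
  have "norm (r / of_real w) < 1" using w rw by (simp add: norm_divide)
  from sums_mult[OF geometric_sums[OF this], of "of_real \<tau> / of_real w"]
  have s1: "(\<lambda>j. of_real \<tau> / of_real w * (r / of_real w) ^ j) sums (of_real \<tau> / of_real w * (1 / (1 - r / of_real w)))" .
  have e1: "of_real \<tau> / of_real w * (1 / (1 - r / of_real w)) = of_real \<tau> / (of_real w - r)"
  proof -
    have "of_real w - r \<noteq> 0" using rw by auto
    then show ?thesis using wn by (simp add: field_simps)
  qed
  have e2: "(\<lambda>j. of_real \<tau> / of_real w * (r / of_real w) ^ j) = (\<lambda>j. of_real \<tau> * r ^ j / of_real w ^ (j + 1))"
    using wn by (intro ext) (simp add: power_divide field_simps)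
  show ?thesis using s1 unfolding e1 e2 .
qed

lemma ml_laplace:
  fixes \<beta> \<tau> s :: real and r :: complex
  assumes b: "\<beta> > 0" and tau: "\<tau> > 0" and s: "s > 0" and rw: "norm r < (s * \<tau>) powr \<beta>"
  shows "((\<lambda>t. complex_of_real (exp (- s * t)) * (complex_of_real ((t / \<tau>) powr (\<beta> - 1)) *
            mittag_leffler \<beta> \<beta> (r * complex_of_real ((t / \<tau>) powr \<beta>))))
         has_integral (complex_of_real \<tau> / (complex_of_real ((s * \<tau>) powr \<beta>) - r))) {0<..}"
proof -
  define w where "w = (s * \<tau>) powr \<beta>"
  have w0: "w > 0" unfolding w_def using s tau by simp
  have rw': "norm r < w" using rw unfolding w_def .
  define \<Gamma>j where "\<Gamma>j j = Gamma (\<beta> + \<beta> * real j)" for j :: nat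
  have \<Gamma>pos: "\<Gamma>j j > 0" for j unfolding \<Gamma>j_def using b by (intro Gamma_real_pos) (simp add: add_pos_nonneg)
  define cf where "cf t = complex_of_real (exp (- s * t) * (t / \<tau>) powr (\<beta> - 1))" for t
  define z where "z t = r * complex_of_real ((t / \<tau>) powr \<beta>)" for t
  define trm where "trm j t = cf t * (z t ^ j / complex_of_real (\<Gamma>j j))" for j t
  define F where "F t = complex_of_real (exp (- s * t)) * (complex_of_real ((t / \<tau>) powr (\<beta> - 1)) *
            mittag_leffler \<beta> \<beta> (z t))" for t
  define habs where "habs j t = norm (trm j t)" for j t
  have wpow: "(s * \<tau>) powr (\<beta> + \<beta> * real j) = w ^ (j + 1)" for j
  proof -
    have "w ^ (j + 1) = w powr real (j + 1)" by (rule powr_realpow[OF w0, symmetric])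
    also have "\<dots> = (s * \<tau>) powr (\<beta> * real (j + 1))" unfolding w_def by (simp add: powr_powr)
    finally show ?thesis by (simp add: algebra_simps)
  qed
  have term_eq: "trm j t = (r ^ j / complex_of_real (\<Gamma>j j)) *
      complex_of_real (exp (- s * t) * (t / \<tau>) powr ((\<beta> + \<beta> * real j) - 1))" if t: "t > 0" for j t
  proof -
    have x0: "t / \<tau> > 0" using t tau by simp
    have "((t / \<tau>) powr \<beta>) ^ j = ((t / \<tau>) powr \<beta>) powr real j"
      by (rule powr_realpow[symmetric]) (use t tau in simp)
    also have "\<dots> = (t / \<tau>) powr (\<beta> * real j)" by (simp add: powr_powr)
    finally have "((t / \<tau>) powr \<beta>) ^ j = (t / \<tau>) powr (\<beta> * real j)" .
    moreover have "complex_of_real ((t / \<tau>) powr (\<beta> - 1)) * complex_of_real ((t / \<tau>) powr (\<beta> * real j)) = complex_of_real ((t / \<tau>) powr ((\<beta> + \<beta> * real j) - 1))"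
    proof -
      have "(t / \<tau>) powr (\<beta> - 1) * (t / \<tau>) powr (\<beta> * real j) = (t / \<tau>) powr ((\<beta> + \<beta> * real j) - 1)"
        by (simp add: powr_add[symmetric] algebra_simps)
      then show ?thesis by (metis of_real_mult)
    qed
    ultimately show ?thesis
      unfolding trm_def cf_def z_def
      by (simp add: power_mult_distrib field_simps of_real_power[symmetric] del: of_real_power)
  qed
  have real_int: "((\<lambda>t. A * (exp (- s * t) * (t / \<tau>) powr ((\<beta> + \<beta> * real j) - 1))) has_integral
       A * (\<tau> * \<Gamma>j j / w ^ (j + 1))) {0<..}" for A j
    using has_integral_mult_right[OF laplace_powr[OF _ s tau, of "\<beta> + \<beta> * real j"], of A] b
    unfolding \<Gamma>j_def wpow by (simp add: add_pos_nonneg)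
  have term_int: "(trm j has_integral (complex_of_real \<tau> * r ^ j / complex_of_real w ^ (j + 1))) {0<..}" for j
  proof -
    have h1: "((\<lambda>t. (r ^ j / complex_of_real (\<Gamma>j j)) * complex_of_real (exp (- s * t) * (t / \<tau>) powr ((\<beta> + \<beta> * real j) - 1)))
        has_integral (r ^ j / complex_of_real (\<Gamma>j j)) * complex_of_real (\<tau> * \<Gamma>j j / w ^ (j + 1))) {0<..}"
      by (rule has_integral_mult_right, rule has_integral_of_real') (use real_int[of 1 j] in simp)
    have v: "(r ^ j / complex_of_real (\<Gamma>j j)) * complex_of_real (\<tau> * \<Gamma>j j / w ^ (j + 1)) =
        complex_of_real \<tau> * r ^ j / complex_of_real w ^ (j + 1)"
      using \<Gamma>pos[of j] by (simp add: field_simps)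
    show ?thesis by (rule has_integral_eq[OF _ h1[unfolded v]]) (auto simp: term_eq)
  qed
  have habs_eq: "habs j t = (norm r ^ j / \<Gamma>j j) * (exp (- s * t) * (t / \<tau>) powr ((\<beta> + \<beta> * real j) - 1))"
    if t: "t > 0" for j t
    unfolding habs_def term_eq[OF t] using \<Gamma>pos[of j]
    by (simp add: norm_mult norm_divide norm_power abs_of_pos)
  have habs_int: "(habs j has_integral (\<tau> * norm r ^ j / w ^ (j + 1))) {0<..}" for j
  proof -
    have h1: "((\<lambda>t. (norm r ^ j / \<Gamma>j j) * (exp (- s * t) * (t / \<tau>) powr ((\<beta> + \<beta> * real j) - 1))) has_integral
       (norm r ^ j / \<Gamma>j j) * (\<tau> * \<Gamma>j j / w ^ (j + 1))) {0<..}" by (rule real_int)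
    have v: "(norm r ^ j / \<Gamma>j j) * (\<tau> * \<Gamma>j j / w ^ (j + 1)) = \<tau> * norm r ^ j / w ^ (j + 1)"
      using \<Gamma>pos[of j] by (simp add: field_simps)
    show ?thesis by (rule has_integral_eq[OF _ h1[unfolded v]]) (auto simp: habs_eq)
  qed
  have habs0: "habs j t \<ge> 0" for j t unfolding habs_def by simp
  have summ: "(\<lambda>j. trm j t) sums F t" for t
  proof -
    have "(\<lambda>j. cf t * (z t ^ j / complex_of_real (\<Gamma>j j))) sums (cf t * mittag_leffler \<beta> \<beta> (z t))"
      by (rule sums_mult) (unfold \<Gamma>j_def, rule ml_sums[OF b])
    moreover have "cf t * mittag_leffler \<beta> \<beta> (z t) = F t" unfolding cf_def F_def by simp
    ultimately show ?thesis unfolding trm_def by simp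
  qed
  have hsumm: "summable (\<lambda>j. habs j t)" for t
  proof -
    have "summable (\<lambda>j. norm (cf t) * norm (z t ^ j / complex_of_real (\<Gamma>j j)))"
      by (rule summable_mult) (unfold \<Gamma>j_def, rule ml_summable(1)[OF b])
    moreover have "(\<lambda>j. habs j t) = (\<lambda>j. norm (cf t) * norm (z t ^ j / complex_of_real (\<Gamma>j j)))"
      unfolding habs_def trm_def by (intro ext) (simp only: norm_mult)
    ultimately show ?thesis by simp
  qed
  define h where "h t = (\<Sum>j. habs j t)" for t
  have hrsums: "(\<lambda>j. \<tau> * norm r ^ j / w ^ (j + 1)) sums (\<tau> / (w - norm r))"
    using geom_sums_w[OF w0, of "norm r" \<tau>] rw' by simp
  have h_int: "h integrable_on {0<..}"
  proof -
    have "h integrable_on {0<..} \<and> ((\<lambda>k. integral {0<..} (\<lambda>t. \<Sum>j<k. habs j t)) \<longlongrightarrow> integral {0<..} h) sequentially"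
    proof (rule monotone_convergence_increasing)
      fix k show "(\<lambda>t. \<Sum>j<k. habs j t) integrable_on {0<..}"
        using has_integral_sum[of "{..<k}" habs, OF _ habs_int] by (auto simp: integrable_on_def)
    next
      fix k t show "(\<Sum>j<k. habs j t) \<le> (\<Sum>j<Suc k. habs j t)" using habs0 by simp
    next
      fix t show "((\<lambda>k. \<Sum>j<k. habs j t) \<longlongrightarrow> h t) sequentially"
        unfolding h_def by (rule summable_LIMSEQ[OF hsumm])
    next
      have "integral {0<..} (\<lambda>t. \<Sum>j<k. habs j t) = (\<Sum>j<k. \<tau> * norm r ^ j / w ^ (j + 1))" for k
        using has_integral_sum[of "{..<k}" habs, OF _ habs_int] by (simp add: integral_unique)
      moreover have "(\<Sum>j<k. \<tau> * norm r ^ j / w ^ (j + 1)) \<le> \<tau> / (w - norm r)" for k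
        using sum_le_suminf[OF sums_summable[OF hrsums], of "{..<k}"] sums_unique[OF hrsums] tau w0
        by (simp add: zero_le_divide_iff)
      moreover have "(\<Sum>j<k. \<tau> * norm r ^ j / w ^ (j + 1)) \<ge> 0" for k
        using tau w0 by (intro sum_nonneg) simp
      ultimately show "bounded (range (\<lambda>k. integral {0<..} (\<lambda>t. \<Sum>j<k. habs j t)))"
        unfolding bounded_real by (intro exI[of _ "\<tau> / (w - norm r)"]) auto
    qed
    then show ?thesis by blast
  qed
  have "(F has_integral (complex_of_real \<tau> / (complex_of_real w - r))) {0<..}"
  proof (rule has_integral_dominated_convergence[where f = "\<lambda>k t. \<Sum>j<k. trm j t"])
    fix k show "((\<lambda>t. \<Sum>j<k. trm j t) has_integral (\<Sum>j<k. complex_of_real \<tau> * r ^ j / complex_of_real w ^ (j + 1))) {0<..}"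
      by (rule has_integral_sum) (simp, rule term_int)
  next
    show "h integrable_on {0<..}" by (rule h_int)
  next
    fix k show "\<forall>t\<in>{0<..}. norm (\<Sum>j<k. trm j t) \<le> h t"
    proof
      fix t :: real
      have "norm (\<Sum>j<k. trm j t) \<le> (\<Sum>j<k. habs j t)" unfolding habs_def by (rule norm_sum)
      also have "\<dots> \<le> h t" unfolding h_def by (rule sum_le_suminf[OF hsumm]) (auto intro: habs0)
      finally show "norm (\<Sum>j<k. trm j t) \<le> h t" .
    qed
  next
    show "\<forall>t\<in>{0<..}. (\<lambda>k. \<Sum>j<k. trm j t) \<longlonglongrightarrow> F t" using summ by (simp add: sums_def)
  next
    show "(\<lambda>k. \<Sum>j<k. complex_of_real \<tau> * r ^ j / complex_of_real w ^ (j + 1)) \<longlonglongrightarrow> complex_of_real \<tau> / (complex_of_real w - r)"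
      using geom_sums_w[OF w0 rw', of \<tau>] by (simp add: sums_def)
  qed
  then show ?thesis unfolding F_def z_def w_def by simp
qed



lemma lerch_bounded:
  fixes H :: "real \<Rightarrow> real"
  assumes cont: "continuous_on {0..} H" and bnd: "\<And>t. t \<ge> 0 \<Longrightarrow> \<bar>H t\<bar> \<le> B"
    and lim: "\<And>k::nat. ((\<lambda>T. integral {0..T} (\<lambda>t. exp (- (1 + real k) * t) * H t)) \<longlongrightarrow> 0) at_top"
    and t0: "t0 \<ge> 0"
  shows "H t0 = 0"
proof -
  have B0: "B \<ge> 0" using bnd[of 0] by simp
  define \<phi> where "\<phi> x = (if x \<le> 0 then 0 else x * H (- ln x))" for x :: real
  have \<phi>cont: "continuous_on {0..1} \<phi>"
    unfolding continuous_on_eq_continuous_within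
  proof
    fix x :: real assume x: "x \<in> {0..1}"
    show "continuous (at x within {0..1}) \<phi>"
    proof (cases "x = 0")
      case True
      have "(\<phi> \<longlongrightarrow> 0) (at 0 within {0..1})"
      proof (rule Lim_null_comparison)
        have bd: "norm (\<phi> y) \<le> B * \<bar>y\<bar>" if y: "y \<in> {0..1}" for y
          proof (cases "y \<le> 0")
            case True then show ?thesis using B0 y by (simp add: \<phi>_def)
          next
            case False
            then have "- ln y \<ge> 0" using y by simp
            then have "\<bar>H (- ln y)\<bar> \<le> B" by (rule bnd)
            then show ?thesis using False by (simp add: \<phi>_def abs_mult mult.commute mult_left_mono)
          qed
        show "\<forall>\<^sub>F y in at 0 within {0..1}. norm (\<phi> y) \<le> B * \<bar>y\<bar>"
          unfolding eventually_at_filter by (rule always_eventually) (use bd in auto)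
        show "((\<lambda>y. B * \<bar>y\<bar>) \<longlongrightarrow> 0) (at 0 within {0..1})"
          by (rule tendsto_eq_intros) (auto intro!: tendsto_eq_intros)
      qed
      moreover have "\<phi> 0 = 0" by (simp add: \<phi>_def)
      ultimately show ?thesis using True by (simp add: continuous_within)
    next
      case False
      then have xp: "x > 0" using x by simp
      have c1: "continuous_on {0<..1} (\<lambda>y. y * H (- ln y))"
      proof (intro continuous_intros)
        show "continuous_on {0<..1} (\<lambda>y. H (- ln y))"
          by (rule continuous_on_compose2[OF cont]) (auto intro!: continuous_intros)
      qed
      have "continuous_on {0<..1} \<phi>"
        by (rule continuous_on_cong[THEN iffD1, OF refl _ c1]) (simp add: \<phi>_def)
      then have "continuous (at x within {0<..1}) \<phi>"
        using x xp by (simp add: continuous_on_eq_continuous_within)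
      moreover have "at x within {0..1} = at x within {0<..1}"
        by (rule at_within_nhd[of x "{0<..}"]) (use xp in auto)
      ultimately show ?thesis by simp
    qed
  qed
  define q where "q t = exp (- t) * H t * \<phi> (exp (- t))" for t
  have q_eq: "q t = (exp (- t) * H t)^2" for t
    unfolding q_def \<phi>_def by (simp add: power2_eq_square)
  have Hc: "continuous_on {0..T} H" for T by (rule continuous_on_subset[OF cont]) auto
  have qc: "continuous_on {0..T} q" for T unfolding q_eq by (intro continuous_intros Hc)
  have qi: "q integrable_on {0..T}" for T by (rule integrable_continuous_interval[OF qc])
  define I where "I T = integral {0..T} q" for T
  have Imono: "I T0 \<le> I T" if "T0 \<le> T" for T0 T
    unfolding I_def using that by (intro integral_subset_le qi) (auto simp: q_eq)
  have expi: "integral {0..T} (\<lambda>t::real. exp (- t)) \<le> 1" for T :: real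
  proof -
    have hi0: "((\<lambda>t::real. exp (- 1 * t)) has_integral (1::real)) {0..}"
      using has_integral_exp_minus_to_infinity[of 1 0] by simp
    have hi: "((\<lambda>t::real. exp (- t)) has_integral (1::real)) {0..}" using hi0 by simp
    have "integral {0..T} (\<lambda>t::real. exp (- t)) \<le> integral {0..} (\<lambda>t::real. exp (- t))"
      by (rule integral_subset_le) (use hi in \<open>auto intro!: integrable_continuous_interval continuous_intros simp: integrable_on_def\<close>)
    also have "\<dots> = 1" using hi by (simp add: integral_unique)
    finally show ?thesis .
  qed
  have key: "I T \<le> (1 + B) * e" if e: "e > 0" and T: "T \<ge> 0" for e T
  proof -
    obtain P where P: "polynomial_function P" "\<And>x. x \<in> {0..1} \<Longrightarrow> norm (\<phi> x - P x) < e"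
      using Stone_Weierstrass_polynomial_function[OF compact_Icc \<phi>cont e] by blast
    obtain c N where cN: "P = (\<lambda>x. \<Sum>i\<le>N. c i * x ^ i)"
      using P(1) unfolding real_polynomial_function_eq[symmetric] real_polynomial_function_iff_sum by blast
    define J where "J T = integral {0..T} (\<lambda>t. exp (- t) * H t * P (exp (- t)))" for T
    have Jeq: "J T = (\<Sum>i\<le>N. c i * integral {0..T} (\<lambda>t. exp (- (1 + real i) * t) * H t))" for T
    proof -
      have eq: "exp (- t) * H t * P (exp (- t)) = (\<Sum>i\<le>N. c i * (exp (- (1 + real i) * t) * H t))" for t
      proof -
        have "exp (- (1 + real i) * t) = exp (- t) * exp (- t) ^ i" for i
          by (simp add: exp_of_nat_mult[symmetric] exp_add[symmetric] algebra_simps)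
        then show ?thesis unfolding cN by (simp add: sum_distrib_left algebra_simps)
      qed
      have int: "(\<lambda>t. c i * (exp (- (1 + real i) * t) * H t)) integrable_on {0..T}" for i :: nat
        by (intro integrable_continuous_interval continuous_intros Hc)
      have "J T = (\<Sum>i\<le>N. integral {0..T} (\<lambda>t. c i * (exp (- (1 + real i) * t) * H t)))"
        unfolding J_def eq by (rule integral_sum, simp, rule int)
      then show ?thesis by (simp add: integral_mult_right)
    qed
    have Jlim: "(J \<longlongrightarrow> 0) at_top"
    proof -
      have "((\<lambda>T. \<Sum>i\<le>N. c i * integral {0..T} (\<lambda>t. exp (- (1 + real i) * t) * H t)) \<longlongrightarrow> (\<Sum>i\<le>N. c i * 0)) at_top"
        by (intro tendsto_sum tendsto_mult tendsto_const lim)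
      then show ?thesis unfolding Jeq by simp
    qed
    have IJ: "I T' \<le> \<bar>J T'\<bar> + B * e" if T': "T' \<ge> 0" for T'
    proof -
      have Pc: "continuous_on {0..T'} (\<lambda>t. P (exp (- t)))" unfolding cN by (intro continuous_intros)
      have i1: "(\<lambda>t. exp (- t) * H t * P (exp (- t))) integrable_on {0..T'}"
        by (intro integrable_continuous_interval continuous_intros Hc Pc)
      have "I T' - J T' = integral {0..T'} (\<lambda>t. q t - exp (- t) * H t * P (exp (- t)))"
        unfolding I_def J_def by (rule integral_diff[symmetric, OF qi i1])
      also have "\<dots> = integral {0..T'} (\<lambda>t. exp (- t) * H t * (\<phi> (exp (- t)) - P (exp (- t))))"
        unfolding q_def by (simp add: algebra_simps)
      also have "\<dots> \<le> norm \<dots>" by simp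
      also have "\<dots> \<le> integral {0..T'} (\<lambda>t. B * e * exp (- t))"
      proof (rule integral_norm_bound_integral)
        show "(\<lambda>t. exp (- t) * H t * (\<phi> (exp (- t)) - P (exp (- t)))) integrable_on {0..T'}"
          using integrable_diff[OF qi i1] unfolding q_def by (simp add: algebra_simps)
        show "(\<lambda>t. B * e * exp (- t)) integrable_on {0..T'}"
          by (intro integrable_continuous_interval continuous_intros)
      next
        fix t assume t: "t \<in> {0..T'}"
        have "exp (- t) \<in> {0..1}" using t by auto
        then have "\<bar>\<phi> (exp (- t)) - P (exp (- t))\<bar> \<le> e" using P(2) by (simp add: less_imp_le)
        moreover have "\<bar>H t\<bar> \<le> B" using t by (intro bnd) simp
        ultimately have "\<bar>H t\<bar> * \<bar>\<phi> (exp (- t)) - P (exp (- t))\<bar> \<le> B * e"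
          by (intro mult_mono) auto
        have "norm (exp (- t) * H t * (\<phi> (exp (- t)) - P (exp (- t)))) = exp (- t) * (\<bar>H t\<bar> * \<bar>\<phi> (exp (- t)) - P (exp (- t))\<bar>)"
          by (simp add: abs_mult)
        also have "\<dots> \<le> exp (- t) * (B * e)" by (rule mult_left_mono) (fact, simp)
        finally show "norm (exp (- t) * H t * (\<phi> (exp (- t)) - P (exp (- t)))) \<le> B * e * exp (- t)"
          by (simp add: algebra_simps)
      qed
      also have "\<dots> = B * e * integral {0..T'} (\<lambda>t. exp (- t))" by simp
      also have "\<dots> \<le> B * e * 1" using B0 e by (intro mult_left_mono expi) auto
      finally show ?thesis by simp
    qed
    obtain T1 where T1: "\<And>T'. T' \<ge> T1 \<Longrightarrow> \<bar>J T'\<bar> < e"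
      using Jlim e unfolding tendsto_iff eventually_at_top_linorder dist_real_def by force
    define T' where "T' = max T T1"
    have "I T \<le> I T'" unfolding T'_def by (rule Imono) simp
    also have "\<dots> \<le> \<bar>J T'\<bar> + B * e" using T by (intro IJ) (simp add: T'_def)
    also have "\<dots> \<le> e + B * e" using T1[of T'] by (simp add: T'_def)
    finally show ?thesis by (simp add: algebra_simps)
  qed
  define T0 where "T0 = t0 + 1"
  have I0: "I T0 = 0"
  proof -
    have nn: "I T0 \<ge> 0" unfolding I_def by (intro integral_nonneg qi) (simp add: q_eq)
    have "\<not> I T0 > 0"
    proof
      assume pos: "I T0 > 0"
      have "I T0 \<le> (1 + B) * (I T0 / (2 * (1 + B)))"
        using B0 pos t0 by (intro key) (auto simp: T0_def)
      then have "I T0 + B * I T0 \<le> 0" using B0 pos by (simp add: field_simps)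
      moreover have "B * I T0 \<ge> 0" using B0 pos by simp
      ultimately show False using pos by linarith
    qed
    then show ?thesis using nn by simp
  qed
  have "q t0 = 0"
  proof (rule has_integral_0_cbox_imp_0[of 0 T0 q])
    show "continuous_on (cbox 0 T0) q" using qc by simp
    show "(q has_integral 0) (cbox 0 T0)" using I0 qi[of T0] unfolding I_def by (simp add: has_integral_iff)
  qed (use t0 in \<open>auto simp: T0_def q_eq\<close>)
  then show ?thesis by (simp add: q_eq)
qed

lemma cont_Ici_bounded:
  fixes H :: "real \<Rightarrow> real"
  assumes c: "continuous_on {0..} H" and l: "(H \<longlongrightarrow> 0) at_top"
  obtains B where "\<And>t. t \<ge> 0 \<Longrightarrow> \<bar>H t\<bar> \<le> B"
proof -
  obtain T1 where T1: "\<And>t. t \<ge> T1 \<Longrightarrow> \<bar>H t\<bar> < 1"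
  proof -
    have "\<forall>\<^sub>F t in at_top. dist (H t) 0 < 1" by (rule tendstoD[OF l zero_less_one])
    then show ?thesis using that unfolding eventually_at_top_linorder dist_real_def by auto
  qed
  have "compact (H ` {0..T1})"
    by (rule compact_continuous_image[OF continuous_on_subset[OF c]]) auto
  then have "bounded (H ` {0..T1})" by (rule compact_imp_bounded)
  then obtain B1 where B1': "\<forall>x\<in>H ` {0..T1}. \<bar>x\<bar> \<le> B1" unfolding bounded_real by (elim exE)
  have B1: "\<bar>H t\<bar> \<le> B1" if "t \<in> {0..T1}" for t using B1' that by blast
  show ?thesis
  proof (rule that[of "max 1 B1"])
    fix t :: real assume t: "t \<ge> 0"
    show "\<bar>H t\<bar> \<le> max 1 B1"
    proof (cases "t \<le> T1")
      case True then show ?thesis using B1[of t] t by simp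
    next
      case False then show ?thesis using T1[of t] by simp
    qed
  qed
qed

lemma lerch:
  fixes g :: "real \<Rightarrow> real"
  assumes cont: "continuous_on {0<..} g"
    and lap: "\<And>s. s \<ge> S \<Longrightarrow> ((\<lambda>t. exp (- s * t) * g t) has_integral 0) {0<..}"
    and t: "t > 0"
  shows "g t = 0"
proof -
  define k where "k x = exp (- S * x) * g x" for x
  have hk: "(k has_integral 0) {0..}" using lap[of S] unfolding k_def hi_Ioi_Ici by simp
  have kint: "k integrable_on {0..T}" for T
    using hk by (intro integrable_on_subinterval[of _ "{0..}"]) (auto simp: integrable_on_def)
  define H where "H T = integral {0..T} k" for T
  have H0: "H 0 = 0" unfolding H_def by simp
  have Hcont: "continuous_on {0..} H"
    unfolding continuous_on_eq_continuous_within
  proof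
    fix x :: real assume x: "x \<in> {0..}"
    have "continuous_on {0..x+1} H" unfolding H_def by (rule indefinite_integral_continuous_1[OF kint])
    then have "continuous (at x within {0..x+1}) H" using x by (simp add: continuous_on_eq_continuous_within)
    moreover have "at x within {0..} = at x within {0..x+1}"
      by (rule at_within_nhd[of x "{x-1<..<x+1}"]) auto
    ultimately show "continuous (at x within {0..}) H" by simp
  qed
  have Hlim: "(H \<longlongrightarrow> 0) at_top" unfolding H_def by (rule integral_tendsto_at_top[OF hk])
  obtain B where Hb: "\<And>t. t \<ge> 0 \<Longrightarrow> \<bar>H t\<bar> \<le> B" using cont_Ici_bounded[OF Hcont Hlim] by blast
  have kc: "isCont k x" if x: "x > 0" for x
  proof -
    have "isCont g x" using cont x by (simp add: continuous_on_eq_continuous_at)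
    then show ?thesis unfolding k_def by (intro continuous_intros)
  qed
  have Hder: "(H has_vector_derivative k x) (at x)" if x: "x > 0" for x
  proof -
    have "(H has_vector_derivative k x) (at x within ({0..x+1} - {}))"
      unfolding H_def
      by (rule integral_has_vector_derivative_continuous_at[OF kint])
         (use x kc[OF x] in \<open>auto intro: continuous_at_imp_continuous_within\<close>)
    moreover have "at x within ({0..x+1} - {}) = at x"
      by (rule at_within_interior) (use x in simp)
    ultimately show ?thesis by simp
  qed
  have Hlap: "((\<lambda>T. integral {0..T} (\<lambda>t. exp (- u * t) * H t)) \<longlongrightarrow> 0) at_top" if u: "u > 0" for u
  proof -
    define Z where "Z T = integral {0..T} (\<lambda>x. exp (- (S + u) * x) * g x)" for T
    have hz: "((\<lambda>x. exp (- (S + u) * x) * g x) has_integral 0) {0..}"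
      using lap[of "S + u"] u unfolding hi_Ioi_Ici by simp
    have Zlim: "(Z \<longlongrightarrow> 0) at_top" unfolding Z_def by (rule integral_tendsto_at_top[OF hz])
    have eq: "integral {0..T} (\<lambda>t. exp (- u * t) * H t) = - exp (- u * T) / u * H T + Z T / u"
      if T: "T \<ge> 0" for T
    proof -
      have zi: "((\<lambda>x. exp (- (S + u) * x) * g x) has_integral Z T) {0..T}"
        unfolding Z_def using hz
        by (intro integrable_integral integrable_on_subinterval[of _ "{0..}"]) (auto simp: integrable_on_def)
      have zi2: "((\<lambda>x. - exp (- u * x) / u * k x) has_integral
          ((- exp (- u * T) / u) * H T - (- exp (- u * 0) / u) * H 0 - (- exp (- u * T) / u * H T + Z T / u))) {0..T}"
      proof -
        have h1: "((\<lambda>x. (- 1 / u) * (exp (- (S + u) * x) * g x)) has_integral (- 1 / u) * Z T) {0..T}"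
          by (rule has_integral_mult_right[OF zi])
        have fe: "(\<lambda>x. (- 1 / u) * (exp (- (S + u) * x) * g x)) = (\<lambda>x. - exp (- u * x) / u * k x)"
          unfolding k_def using u by (intro ext) (simp add: algebra_simps exp_add[symmetric])
        have v: "(- 1 / u) * Z T = (- exp (- u * T) / u) * H T - (- exp (- u * 0) / u) * H 0 - (- exp (- u * T) / u * H T + Z T / u)"
          using H0 by (simp add: field_simps)
        show ?thesis using h1 unfolding fe v .
      qed
      have "((\<lambda>x. exp (- u * x) * H x) has_integral (- exp (- u * T) / u * H T + Z T / u)) {0..T}"
      proof (rule integration_by_parts_interior_strong[OF bounded_bilinear_mult, of "{}" 0 T
            "\<lambda>x. - exp (- u * x) / u" H "\<lambda>x. exp (- u * x)" k])
        show "continuous_on {0..T} (\<lambda>x. - exp (- u * x) / u)" using u by (intro continuous_intros) auto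
        show "continuous_on {0..T} H" by (rule continuous_on_subset[OF Hcont]) auto
        fix x assume x: "x \<in> {0<..<T} - {}"
        show "((\<lambda>x. - exp (- u * x) / u) has_vector_derivative exp (- u * x)) (at x)"
          unfolding has_real_derivative_iff_has_vector_derivative[symmetric]
          using u by (auto intro!: derivative_eq_intros simp: field_simps)
        show "(H has_vector_derivative k x) (at x)" using x by (intro Hder) simp
      qed (use T zi2 in auto)
      then show ?thesis by (simp add: integral_unique)
    qed
    have "((\<lambda>T. - exp (- u * T) / u * H T + Z T / u) \<longlongrightarrow> - 0 / u * 0 + 0 / u) at_top"
    proof (intro tendsto_intros Hlim Zlim)
      show "((\<lambda>T. exp (- u * T)) \<longlongrightarrow> 0) at_top"
        using u by (intro filterlim_compose[OF exp_at_bot] filterlim_tendsto_neg_mult_at_bot[OF tendsto_const _ filterlim_ident]) simp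
    qed (use u in auto)
    then have "((\<lambda>T. - exp (- u * T) / u * H T + Z T / u) \<longlongrightarrow> 0) at_top" by simp
    then show ?thesis
      by (rule Lim_transform_eventually) (use eq in \<open>auto intro!: eventually_mono[OF eventually_ge_at_top[of 0]]\<close>)
  qed
  have HL: "((\<lambda>T. integral {0..T} (\<lambda>t. exp (- (1 + real j) * t) * H t)) \<longlongrightarrow> 0) at_top" for j :: nat
    by (rule Hlap) (simp add: add_pos_nonneg)
  have Hz: "H x = 0" if "x \<ge> 0" for x
    by (rule lerch_bounded[OF Hcont Hb HL that])
  have "((\<lambda>_. 0::real) has_vector_derivative k t) (at t)"
    by (rule has_vector_derivative_transform_within_open[OF Hder[OF t], of "{0<..}"]) (use t Hz in auto)
  moreover have "((\<lambda>_. 0::real) has_vector_derivative 0) (at t)" by (rule has_vector_derivative_const)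
  ultimately have "k t = 0" by (rule vector_derivative_unique_at)
  then show ?thesis unfolding k_def by simp
qed



lemma p_nm_props:
  assumes "0 < m" "m < n"
  shows "degree (p_nm n m) = n" "lead_coeff (p_nm n m) = 1"
    "poly (p_nm n m) w = w ^ n + complex_of_real (Gamma (1 + real m / real n)) * w ^ (n - m) + 1"
proof -
  have c: "coeff (p_nm n m) i = (if i = n then 1 else 0) + (if i = n - m then complex_of_real (Gamma (1 + real m / real n)) else 0) + (if i = 0 then 1 else 0)" for i
    unfolding p_nm_def by (simp add: coeff_monom)
  have le: "degree (p_nm n m) \<le> n"
    by (rule degree_le) (use assms in \<open>auto simp: c\<close>)
  have cn: "coeff (p_nm n m) n = 1" using assms by (simp add: c)
  then have "n \<le> degree (p_nm n m)" by (intro le_degree) simp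
  with le show d: "degree (p_nm n m) = n" by simp
  show "lead_coeff (p_nm n m) = 1" using d cn by simp
  show "poly (p_nm n m) w = w ^ n + complex_of_real (Gamma (1 + real m / real n)) * w ^ (n - m) + 1"
    unfolding p_nm_def by (simp add: poly_monom)
qed

lemma main_claim:
  fixes \<mu> \<tau> :: real and m n :: nat and G :: "real \<Rightarrow> real" and r :: "nat \<Rightarrow> complex"
  assumes "\<mu> > 0" and tau: "\<tau> > 0" and m0: "0 < m" and mn: "m < n"
    and G_cont: "continuous_on {0<..} G"
    and G_laplace: "\<And>s::real. s > 0 \<Longrightarrow>
       ((\<lambda>t. exp (- s * t) * G t) has_integral
          (\<mu> * \<tau> / (s * \<tau> + Gamma (1 + real m / real n) * (s * \<tau>) powr (1 - real m / real n) + 1)))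
        {0<..}"
    and roots: "\<And>k. k \<in> {1..n} \<Longrightarrow> poly (p_nm n m) (r k) = 0"
    and distinct: "inj_on r {1..n}"
    and t: "t > 0"
  shows "complex_of_real (G t) =
        complex_of_real (\<mu> * (t / \<tau>) powr (1 / real n - 1)) *
        (\<Sum>k=1..n. mittag_leffler (1 / real n) (1 / real n)
                      (r k * complex_of_real ((t / \<tau>) powr (1 / real n)))
                   / poly (pderiv (p_nm n m)) (r k))"
proof -
  define \<beta> where "\<beta> = 1 / real n"
  have n0: "n > 0" using mn by simp
  have b0: "\<beta> > 0" unfolding \<beta>_def using n0 by simp
  define p where "p = p_nm n m"
  define d where "d k = poly (pderiv p) (r k)" for k
  define \<gamma> where "\<gamma> = Gamma (1 + real m / real n)"
  have \<gamma>0: "\<gamma> > 0" unfolding \<gamma>_def by (intro Gamma_real_pos) (simp add: add_pos_nonneg)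
  define \<Phi> where "\<Phi> t = complex_of_real (\<mu> * (t / \<tau>) powr (\<beta> - 1)) *
        (\<Sum>k=1..n. mittag_leffler \<beta> \<beta> (r k * complex_of_real ((t / \<tau>) powr \<beta>)) / d k)" for t
  define h where "h t = complex_of_real (G t) - \<Phi> t" for t
  have MLc: "continuous_on UNIV (mittag_leffler \<beta> \<beta>)"
    by (simp add: continuous_at_imp_continuous_on ml_isCont[OF b0])
  define Kf where "Kf k x = mittag_leffler \<beta> \<beta> (r k * complex_of_real ((x / \<tau>) powr \<beta>)) / d k" for k x
  have Kc: "continuous_on {0<..} (Kf k)" for k
  proof -
    have "continuous_on {0<..} (\<lambda>x. mittag_leffler \<beta> \<beta> (r k * complex_of_real ((x / \<tau>) powr \<beta>)))"
      by (rule continuous_on_compose2[OF MLc]) (use tau in \<open>auto intro!: continuous_intros\<close>)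
    then show ?thesis unfolding Kf_def divide_inverse by (rule continuous_on_mult_right)
  qed
  have \<Phi>K: "\<Phi> t = complex_of_real (\<mu> * (t / \<tau>) powr (\<beta> - 1)) * (\<Sum>k=1..n. Kf k t)" for t
    unfolding \<Phi>_def Kf_def ..
  have hc: "continuous_on {0<..} h"
    unfolding h_def \<Phi>K
    by (intro continuous_intros continuous_on_of_real G_cont Kc) (use tau in auto)
  define M where "M = (\<Sum>k=1..n. norm (r k))"
  have M0: "M \<ge> 0" unfolding M_def by (intro sum_nonneg) simp
  have rM: "norm (r k) \<le> M" if "k \<in> {1..n}" for k
    unfolding M_def by (rule member_le_sum) (use that in auto)
  define S0 where "S0 = (M + 1) ^ n / \<tau>"
  have S0p: "S0 > 0" unfolding S0_def using M0 tau by simp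
  have lapz: "((\<lambda>t. complex_of_real (exp (- s * t)) * h t) has_integral 0) {0<..}" if s: "s \<ge> S0" for s
  proof -
    have sp: "s > 0" using s S0p by simp
    define w where "w = (s * \<tau>) powr \<beta>"
    have w1: "w \<ge> M + 1"
    proof -
      have "(M + 1) ^ n \<le> s * \<tau>" using s tau unfolding S0_def by (simp add: field_simps)
      then have "((M + 1) ^ n) powr \<beta> \<le> (s * \<tau>) powr \<beta>" using b0 M0 by (intro powr_mono2) auto
      moreover have "((M + 1) ^ n) powr \<beta> = M + 1"
      proof -
        have "((M + 1) ^ n) powr \<beta> = ((M + 1) powr real n) powr \<beta>" using M0 by (simp add: powr_realpow)
        also have "\<dots> = M + 1" using n0 M0 unfolding \<beta>_def by (simp add: powr_powr)
        finally show ?thesis .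
      qed
      ultimately show ?thesis unfolding w_def by simp
    qed
    have wp: "w > 0" using w1 M0 by simp
    have rw: "norm (r k) < (s * \<tau>) powr \<beta>" if "k \<in> {1..n}" for k
      using rM[OF that] w1 unfolding w_def by simp
    define den where "den = s * \<tau> + \<gamma> * (s * \<tau>) powr (1 - real m / real n) + 1"
    have denp: "den > 0" unfolding den_def using sp tau \<gamma>0 by (simp add: add_pos_nonneg)
    have wn: "w ^ n = s * \<tau>"
    proof -
      have "w ^ n = w powr real n" using wp by (simp add: powr_realpow)
      also have "\<dots> = s * \<tau>" unfolding w_def \<beta>_def using n0 sp tau by (simp add: powr_powr)
      finally show ?thesis .
    qed
    have wnm: "w ^ (n - m) = (s * \<tau>) powr (1 - real m / real n)"
    proof -
      have "w ^ (n - m) = w powr real (n - m)" using wp by (simp add: powr_realpow)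
      also have "\<dots> = (s * \<tau>) powr (real (n - m) / real n)" unfolding w_def \<beta>_def by (simp add: powr_powr)
      also have "real (n - m) / real n = 1 - real m / real n" using mn n0 by (simp add: of_nat_diff field_simps)
      finally show ?thesis .
    qed
    have pw: "poly p (complex_of_real w) = complex_of_real den"
    proof -
      have "poly p (complex_of_real w) = complex_of_real (w ^ n + \<gamma> * w ^ (n - m) + 1)"
        unfolding p_def p_nm_props(3)[OF m0 mn] \<gamma>_def by simp
      also have "w ^ n + \<gamma> * w ^ (n - m) + 1 = den" unfolding den_def wn wnm ..
      finally show ?thesis .
    qed
    have pw0: "poly p (complex_of_real w) \<noteq> 0" using pw denp by simp
    have pf: "(\<Sum>k=1..n. 1 / (d k * (complex_of_real w - r k))) = 1 / poly p (complex_of_real w)"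
      unfolding d_def
      by (rule partial_frac[OF _ _ n0 _ distinct pw0]) (use p_nm_props[OF m0 mn] roots in \<open>auto simp: p_def\<close>)
    have Gi: "((\<lambda>t. complex_of_real (exp (- s * t) * G t)) has_integral complex_of_real (\<mu> * \<tau> / den)) {0<..}"
      using has_integral_of_real'[OF G_laplace[OF sp]] unfolding den_def \<gamma>_def .
    have Gi': "((\<lambda>t. complex_of_real (exp (- s * t)) * complex_of_real (G t)) has_integral complex_of_real (\<mu> * \<tau> / den)) {0<..}"
      using Gi by simp
    have Ki: "((\<lambda>t. complex_of_real (exp (- s * t)) * (complex_of_real ((t / \<tau>) powr (\<beta> - 1)) *
            mittag_leffler \<beta> \<beta> (r k * complex_of_real ((t / \<tau>) powr \<beta>))))
         has_integral (complex_of_real \<tau> / (complex_of_real w - r k))) {0<..}" if k: "k \<in> {1..n}" for k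
      unfolding w_def by (rule ml_laplace[OF b0 tau sp rw[OF k]])
    have Phii: "((\<lambda>t. \<Sum>k=1..n. complex_of_real \<mu> / d k * (complex_of_real (exp (- s * t)) * (complex_of_real ((t / \<tau>) powr (\<beta> - 1)) *
            mittag_leffler \<beta> \<beta> (r k * complex_of_real ((t / \<tau>) powr \<beta>)))))
         has_integral (\<Sum>k=1..n. complex_of_real \<mu> / d k * (complex_of_real \<tau> / (complex_of_real w - r k)))) {0<..}"
      by (rule has_integral_sum) (simp, rule has_integral_mult_right, rule Ki, simp)
    have Phieq: "(\<Sum>k=1..n. complex_of_real \<mu> / d k * (complex_of_real (exp (- s * t)) * (complex_of_real ((t / \<tau>) powr (\<beta> - 1)) *
            mittag_leffler \<beta> \<beta> (r k * complex_of_real ((t / \<tau>) powr \<beta>)))))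
        = complex_of_real (exp (- s * t)) * \<Phi> t" for t
      unfolding \<Phi>_def by (simp add: sum_distrib_left field_simps)
    have valeq: "(\<Sum>k=1..n. complex_of_real \<mu> / d k * (complex_of_real \<tau> / (complex_of_real w - r k)))
        = complex_of_real (\<mu> * \<tau> / den)"
    proof -
      have "(\<Sum>k=1..n. complex_of_real \<mu> / d k * (complex_of_real \<tau> / (complex_of_real w - r k)))
          = complex_of_real \<mu> * complex_of_real \<tau> * (\<Sum>k=1..n. 1 / (d k * (complex_of_real w - r k)))"
        by (simp add: sum_distrib_left)
      also have "\<dots> = complex_of_real (\<mu> * \<tau> / den)" unfolding pf pw by simp
      finally show ?thesis .
    qed
    have "((\<lambda>t. complex_of_real (exp (- s * t)) * \<Phi> t) has_integral complex_of_real (\<mu> * \<tau> / den)) {0<..}"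
      using Phii unfolding Phieq valeq .
    from has_integral_diff[OF Gi' this]
    show ?thesis unfolding h_def by (simp add: algebra_simps)
  qed
  have ReZ: "Re (h t) = 0"
  proof (rule lerch[of "\<lambda>t. Re (h t)" S0])
    show "continuous_on {0<..} (\<lambda>t. Re (h t))" by (intro continuous_on_Re hc)
    fix s :: real assume "s \<ge> S0"
    from has_integral_Re[OF lapz[OF this]]
    show "((\<lambda>t. exp (- s * t) * Re (h t)) has_integral 0) {0<..}" by simp
  qed (rule t)
  have ImZ: "Im (h t) = 0"
  proof (rule lerch[of "\<lambda>t. Im (h t)" S0])
    show "continuous_on {0<..} (\<lambda>t. Im (h t))" by (intro continuous_on_Im hc)
    fix s :: real assume "s \<ge> S0"
    from has_integral_Im[OF lapz[OF this]]
    show "((\<lambda>t. exp (- s * t) * Im (h t)) has_integral 0) {0<..}" by simp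
  qed (rule t)
  have "h t = 0" using ReZ ImZ by (simp add: complex_eq_iff)
  then show ?thesis unfolding h_def \<Phi>_def d_def p_def \<beta>_def by simp
qed


theorem mainTheorem1:
  fixes \<mu> \<tau> :: real and m n :: nat and G :: "real \<Rightarrow> real" and r :: "nat \<Rightarrow> complex"
  assumes "\<mu> > 0" and "\<tau> > 0" and "0 < m" and "m < n"
    and G_cont: "continuous_on {0<..} G"
    and G_laplace: "\<And>s::real. s > 0 \<Longrightarrow>
       ((\<lambda>t. exp (- s * t) * G t) has_integral
          (\<mu> * \<tau> / (s * \<tau> + Gamma (1 + real m / real n) * (s * \<tau>) powr (1 - real m / real n) + 1)))
        {0<..}"
    and roots: "\<And>k. k \<in> {1..n} \<Longrightarrow> poly (p_nm n m) (r k) = 0"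
    and distinct: "inj_on r {1..n}"
  shows "\<forall>t>0.
      complex_of_real (G t) =
        complex_of_real (\<mu> * (t / \<tau>) powr (1 / real n - 1)) *
        (\<Sum>k=1..n. mittag_leffler (1 / real n) (1 / real n)
                      (r k * complex_of_real ((t / \<tau>) powr (1 / real n)))
                   / poly (pderiv (p_nm n m)) (r k))
    \<and> complex_of_real (G t) =
        complex_of_real \<mu> *
        (\<Sum>k=1..n. rabotnov (1 / real n - 1) (r k) (t / \<tau>) / poly (pderiv (p_nm n m)) (r k))"
proof (intro allI impI conjI)
  fix t :: real assume t: "t > 0"
  show c1: "complex_of_real (G t) =
        complex_of_real (\<mu> * (t / \<tau>) powr (1 / real n - 1)) *
        (\<Sum>k=1..n. mittag_leffler (1 / real n) (1 / real n)
                      (r k * complex_of_real ((t / \<tau>) powr (1 / real n)))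
                   / poly (pderiv (p_nm n m)) (r k))"
    by (rule main_claim[OF assms t])
  have "(\<Sum>k=1..n. rabotnov (1 / real n - 1) (r k) (t / \<tau>) / poly (pderiv (p_nm n m)) (r k)) =
     complex_of_real ((t / \<tau>) powr (1 / real n - 1)) *
        (\<Sum>k=1..n. mittag_leffler (1 / real n) (1 / real n)
                      (r k * complex_of_real ((t / \<tau>) powr (1 / real n)))
                   / poly (pderiv (p_nm n m)) (r k))"
    unfolding rabotnov_def by (simp add: sum_distrib_left)
  then show "complex_of_real (G t) =
        complex_of_real \<mu> *
        (\<Sum>k=1..n. rabotnov (1 / real n - 1) (r k) (t / \<tau>) / poly (pderiv (p_nm n m)) (r k))"
    unfolding c1 by simp
qed

end
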